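(* Let $\alpha:X\to\mathbb PLX$ be a measurable map (a continuous probabilistic transition system). Let $\tilde\alpha^\#=\langle\tilde\alpha^\#_1,\tilde\alpha^\#_*,a\mapsto\tau_a\rangle:\mathbb DX\to F\mathbb DX$ be given by $$\tilde\alpha^\#_1(m)=\int_X\alpha(-)(LX)\,dm,\quad \tilde\alpha^\#_*(m)=\int_X\alpha(-)(1)\,dm,\quad \tau_a(m)(S)=\int_X\alpha(-)(\{a\}\times S)\,dm\ (S\in\Sigma_X).$$ Then $\tilde\alpha^\#$ satisfies $\tilde\alpha^\#_1(m)=\tilde\alpha^\#_*(m)+\sum_{a\in A}\tilde\alpha^\#_1(\tau_a(m))$ for all $m\in\mathbb DX$, so there is a unique $F$-coalgebra morphism $[\![-]\!]:\mathbb DX\to\mathbb DA^\infty$ from $\tilde\alpha^\#$ to $\Pi$. Writing $\langle\!\langle x\rangle\!\rangle=[\![\eta_X(x)]\!]$ for $x\in X$, we have for all $m\in\mathbb DX$ and all $S\in S_\infty$: $$[\![m]\!](S)=\int_X\langle\!\langle -\rangle\!\rangle(S)\,dm.$$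
   Context: Work in $\mathbf{Meas}$. $\mathbb I=[0,1]$; $A$ finite alphabet (discrete $\sigma$-algebra); $1=\{*\}$. $LX=A\times X+1$ with $\sigma$-algebra $(\mathcal P(A)\otimes\Sigma_X)\oplus\mathcal P(1)$. For a measurable space $X$, $\mathbb DX$ is the set of sub-probability measures on $X$ and $\mathbb PX\subseteq\mathbb DX$ the probability measures, both with the $\sigma$-algebra generated by $m\mapsto m(S)$; $\eta_X(x)$ is the Dirac measure at $x$. $A^\infty=A^*\cup A^\omega$ with $\sigma$-algebra generated by $S_\infty=\{\emptyset\}\cup\{\{w\}\mid w\in A^*\}\cup\{wA^\infty\mid w\in A^*\}$ ($\varepsilon$ the empty word, $wS=\{wv\mid v\in S\}$). $F$ is the functor $FX=\mathbb I\times\mathbb I\times X^A$, $Ff=\mathrm{id}\times\mathrm{id}\times f^A$. $\Pi:\mathbb DA^\infty\to F\mathbb DA^\infty$ is $\Pi(m)=\langle m(A^\infty),m(\{\varepsilon\}),a\mapsto m_a\rangle$ with $m_a(S)=m(aS)$. An $F$-coalgebra morphism from $(Y,\beta)$ to $(\mathbb DA^\infty,\Pi)$ is a measurable $h$ with $\Pi\circ h=Fh\circ\beta$. *)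

theory Defs
  imports "HOL-Probability.Probability"
begin

text \<open>A word in A^\<infinity> is represented as an option-sequence that, once None, stays None.
  Finite words of length n are exactly those with w n = None, w k = Some _ for k < n.\<close>

type_synonym 'a inf_word = "nat \<Rightarrow> 'a option"

definition Ainf :: "'a inf_word set" where
  "Ainf = {w. \<forall>n. w n = None \<longrightarrow> w (Suc n) = None}"

definition fin_word :: "'a list \<Rightarrow> 'a inf_word" where
  "fin_word xs = (\<lambda>n. if n < length xs then Some (xs ! n) else None)"

definition wcat :: "'a list \<Rightarrow> 'a inf_word \<Rightarrow> 'a inf_word" where
  "wcat xs v = (\<lambda>n. if n < length xs then Some (xs ! n) else v (n - length xs))"

definition S_inf :: "'a inf_word set set" where
  "S_inf = {{}} \<union> {{fin_word w} | w. True} \<union> {wcat w ` Ainf | w. True}"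

definition Ainf_M :: "'a inf_word measure" where
  "Ainf_M = sigma Ainf S_inf"

section \<open>LX = A \<times> X + 1, with None playing the role of *\<close>

definition L_M :: "'x measure \<Rightarrow> ('a \<times> 'x) option measure" where
  "L_M M = sigma (Some ` (UNIV \<times> space M) \<union> {None})
     {S. S \<subseteq> Some ` (UNIV \<times> space M) \<union> {None} \<and>
         Some -` S \<in> sets (count_space UNIV \<Otimes>\<^sub>M M)}"

section \<open>The functor F X = I \<times> I \<times> X^A (unit interval values taken in ennreal)\<close>

definition F_map :: "('y \<Rightarrow> 'z) \<Rightarrow> ennreal \<times> ennreal \<times> ('a \<Rightarrow> 'y) \<Rightarrow> ennreal \<times> ennreal \<times> ('a \<Rightarrow> 'z)" where
  "F_map h t = (fst t, fst (snd t), h \<circ> snd (snd t))"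

definition is_F_morphism ::
  "'y measure \<Rightarrow> ('y \<Rightarrow> ennreal \<times> ennreal \<times> ('a \<Rightarrow> 'y)) \<Rightarrow>
   'z measure \<Rightarrow> ('z \<Rightarrow> ennreal \<times> ennreal \<times> ('a \<Rightarrow> 'z)) \<Rightarrow> ('y \<Rightarrow> 'z) \<Rightarrow> bool" where
  "is_F_morphism Y \<beta> Z \<gamma> h \<longleftrightarrow>
     h \<in> Y \<rightarrow>\<^sub>M Z \<and> (\<forall>y\<in>space Y. \<gamma> (h y) = F_map h (\<beta> y))"

definition word_deriv :: "'a inf_word measure \<Rightarrow> 'a \<Rightarrow> 'a inf_word measure" where
  "word_deriv m a = measure_of Ainf (sets (Ainf_M :: 'a inf_word measure))
     (\<lambda>S. emeasure m (wcat [a] ` S))"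

definition Pi_coalg :: "'a inf_word measure \<Rightarrow> ennreal \<times> ennreal \<times> ('a \<Rightarrow> 'a inf_word measure)" where
  "Pi_coalg m = (emeasure m Ainf, emeasure m {fin_word []}, \<lambda>a. word_deriv m a)"

definition alpha1 :: "'x measure \<Rightarrow> ('x \<Rightarrow> ('a \<times> 'x) option measure) \<Rightarrow> 'x measure \<Rightarrow> ennreal" where
  "alpha1 M \<alpha> m = (\<integral>\<^sup>+ x. emeasure (\<alpha> x) (space (L_M M :: ('a \<times> 'x) option measure)) \<partial>m)"

definition alphaStar :: "'x measure \<Rightarrow> ('x \<Rightarrow> ('a \<times> 'x) option measure) \<Rightarrow> 'x measure \<Rightarrow> ennreal" where
  "alphaStar M \<alpha> m = (\<integral>\<^sup>+ x. emeasure (\<alpha> x) {None} \<partial>m)"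

definition tau :: "'x measure \<Rightarrow> ('x \<Rightarrow> ('a \<times> 'x) option measure) \<Rightarrow> 'a \<Rightarrow> 'x measure \<Rightarrow> 'x measure" where
  "tau M \<alpha> a m = measure_of (space M) (sets M)
     (\<lambda>S. \<integral>\<^sup>+ x. emeasure (\<alpha> x) (Some ` ({a} \<times> S)) \<partial>m)"

definition alpha_sharp :: "'x measure \<Rightarrow> ('x \<Rightarrow> ('a \<times> 'x) option measure) \<Rightarrow> 'x measure
    \<Rightarrow> ennreal \<times> ennreal \<times> ('a \<Rightarrow> 'x measure)" where
  "alpha_sharp M \<alpha> m = (alpha1 M \<alpha> m, alphaStar M \<alpha> m, \<lambda>a. tau M \<alpha> a m)"

end

theory Submission
  imports Defs
begin


lemma Ainf_None: assumes "w \<in> Ainf" "w n = None" "n \<le> k" shows "w k = None"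
  using assms(3) by (induction k rule: dec_induct) (use assms in \<open>auto simp: Ainf_def\<close>)

lemma wcat_Ainf: "v \<in> Ainf \<Longrightarrow> wcat w v \<in> Ainf"
  unfolding Ainf_def wcat_def
  by (auto split: if_splits simp: Suc_diff_le)

lemma fin_word_Ainf[simp]: "fin_word w \<in> Ainf"
  unfolding Ainf_def fin_word_def by auto

lemma wcat_image: "wcat w ` Ainf = {v \<in> Ainf. \<forall>k<length w. v k = Some (w!k)}"
proof safe
  fix v :: "'a inf_word" assume v: "v \<in> Ainf"
  show "wcat w v \<in> Ainf" using v by (rule wcat_Ainf)
  show "\<And>k. k < length w \<Longrightarrow> wcat w v k = Some (w!k)" by (simp add: wcat_def)
next
  fix v assume v: "v \<in> Ainf" and h: "\<forall>k<length w. v k = Some (w!k)"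
  have "(\<lambda>n. v (n + length w)) \<in> Ainf" using v by (auto simp: Ainf_def)
  moreover have "wcat w (\<lambda>n. v (n + length w)) = v"
    using h by (auto simp: wcat_def fun_eq_iff)
  ultimately show "v \<in> wcat w ` Ainf" by (metis image_eqI)
qed

lemma wcat_Nil[simp]: "wcat [] v = v" by (simp add: wcat_def)

lemma wcat_Nil_Ainf[simp]: "wcat [] ` Ainf = Ainf" by simp

lemma fin_word_eq_iff:
  assumes "v \<in> Ainf"
  shows "(v = fin_word w) \<longleftrightarrow> (\<forall>k<length w. v k = Some (w!k)) \<and> v (length w) = None"
proof
  assume "v = fin_word w" then show "(\<forall>k<length w. v k = Some (w!k)) \<and> v (length w) = None"
    by (simp add: fin_word_def)
next
  assume h: "(\<forall>k<length w. v k = Some (w!k)) \<and> v (length w) = None"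
  show "v = fin_word w"
  proof
    fix n show "v n = fin_word w n"
      using h Ainf_None[OF assms, of "length w" n] by (cases "n < length w") (auto simp: fin_word_def)
  qed
qed

lemma S_inf_Pow: "S_inf \<subseteq> Pow Ainf"
  unfolding S_inf_def using wcat_Ainf by auto

lemma sets_Ainf_M: "sets Ainf_M = sigma_sets Ainf S_inf"
  unfolding Ainf_M_def by (rule sets_measure_of[OF S_inf_Pow])

lemma space_Ainf_M: "space Ainf_M = Ainf"
  unfolding Ainf_M_def by (rule space_measure_of[OF S_inf_Pow])

lemma S_inf_sets: "S_inf \<subseteq> sets Ainf_M"
  unfolding sets_Ainf_M by auto

lemma cyl_sets[measurable]: "wcat w ` Ainf \<in> sets Ainf_M"
  using S_inf_sets unfolding S_inf_def by auto

lemma fin_sets[measurable]: "{fin_word w} \<in> sets Ainf_M"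
  using S_inf_sets unfolding S_inf_def by auto

lemma Ainf_sets[measurable]: "Ainf \<in> sets Ainf_M"
  using cyl_sets[of "[]"] by simp

lemma cyl_Int:
  assumes "length w \<le> length v"
  shows "wcat w ` Ainf \<inter> wcat v ` Ainf = (if take (length w) v = w then wcat v ` Ainf else {})"
proof (cases "take (length w) v = w")
  case True
  then have "\<forall>k<length w. v ! k = w ! k" using assms by (metis nth_take)
  then show ?thesis using True assms unfolding wcat_image by auto
next
  case False
  then obtain k where k: "k < length w" "v ! k \<noteq> w ! k"
    using assms by (metis length_take min.absorb2 nth_equalityI nth_take)
  then show ?thesis using False assms unfolding wcat_image by force
qed

lemma fin_cyl: "fin_word w \<in> wcat v ` Ainf \<longleftrightarrow> length v \<le> length w \<and> take (length v) w = v"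
proof -
  have "fin_word w \<in> wcat v ` Ainf \<longleftrightarrow> (\<forall>k<length v. fin_word w k = Some (v!k))"
    unfolding wcat_image by simp
  also have "\<dots> \<longleftrightarrow> length v \<le> length w \<and> take (length v) w = v"
  proof
    assume h: "\<forall>k<length v. fin_word w k = Some (v!k)"
    then have le: "length v \<le> length w"
      by (metis fin_word_def le_less_linear less_imp_le_nat option.distinct(1) order_less_trans linorder_not_le)
    moreover have "take (length v) w = v"
      using h le by (intro nth_equalityI) (auto simp: fin_word_def)
    ultimately show "length v \<le> length w \<and> take (length v) w = v" by simp
  next
    assume "length v \<le> length w \<and> take (length v) w = v"
    then show "\<forall>k<length v. fin_word w k = Some (v!k)"
      by (auto simp: fin_word_def) (metis nth_take)
  qed
  finally show ?thesis .
qed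

lemma fin_word_inj[simp]: "fin_word w = fin_word v \<longleftrightarrow> w = v"
proof
  assume h: "fin_word w = fin_word v"
  have a: "fin_word w \<in> wcat w ` Ainf" "fin_word v \<in> wcat v ` Ainf"
    by (simp_all only: fin_cyl) simp_all
  then have "fin_word w \<in> wcat v ` Ainf" "fin_word v \<in> wcat w ` Ainf" using h by auto
  then show "w = v" using fin_cyl by (metis le_antisym take_all)
qed simp

lemma Int_stable_S_inf: "Int_stable (S_inf :: 'a inf_word set set)"
proof (rule Int_stableI)
  fix X Y :: "'a inf_word set" assume X: "X \<in> S_inf" and Y: "Y \<in> S_inf"
  have cc: "wcat w ` Ainf \<inter> wcat v ` Ainf \<in> S_inf" for w v :: "'a list"
  proof (cases "length w \<le> length v")
    case True then show ?thesis using cyl_Int[OF True] by (auto simp: S_inf_def)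
  next
    case False
    then have "length v \<le> length w" by simp
    from cyl_Int[OF this] show ?thesis by (auto simp: S_inf_def Int_commute)
  qed
  have fc: "{fin_word w} \<inter> wcat v ` Ainf \<in> S_inf" for w v :: "'a list"
    by (cases "fin_word w \<in> wcat v ` Ainf") (auto simp: S_inf_def)
  have ff: "{fin_word w} \<inter> {fin_word v} \<in> S_inf" for w v :: "'a list"
    by (cases "w = v") (auto simp: S_inf_def)
  have e: "{} \<in> S_inf" by (simp add: S_inf_def)
  from X have "X = {} \<or> (\<exists>w. X = {fin_word w}) \<or> (\<exists>w. X = wcat w ` Ainf)" by (auto simp: S_inf_def)
  moreover from Y have "Y = {} \<or> (\<exists>w. Y = {fin_word w}) \<or> (\<exists>w. Y = wcat w ` Ainf)" by (auto simp: S_inf_def)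
  ultimately show "X \<inter> Y \<in> S_inf"
    using cc fc ff e by (auto simp: Int_commute)
qed



lemma wcat_Cons1: "wcat [a] (wcat w v) = wcat (a#w) v"
  by (auto simp: wcat_def fun_eq_iff nth_Cons')

lemma wcat_cyl: "wcat [a] ` wcat w ` Ainf = wcat (a#w) ` Ainf"
  by (simp add: image_image wcat_Cons1)

lemma wcat_fin: "wcat [a] (fin_word w) = fin_word (a#w)"
  by (auto simp: wcat_def fin_word_def fun_eq_iff nth_Cons')

lemma inj_wcat1: "inj (wcat [a])"
proof (rule injI)
  fix v v' assume h: "wcat [a] v = wcat [a] v'"
  show "v = v'"
  proof
    fix n have "wcat [a] v (Suc n) = wcat [a] v' (Suc n)" using h by simp
    then show "v n = v' n" by (simp add: wcat_def)
  qed
qed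

lemma wcat_sigma: "S \<in> sigma_sets Ainf S_inf \<Longrightarrow> wcat [a] ` S \<in> sigma_sets Ainf S_inf"
proof (induction rule: sigma_sets.induct)
  case (Basic X)
  then have "X = {} \<or> (\<exists>w. X = {fin_word w}) \<or> (\<exists>w. X = wcat w ` Ainf)" by (auto simp: S_inf_def)
  then have "wcat [a] ` X \<in> S_inf"
  proof (elim disjE exE)
    fix w assume "X = wcat w ` Ainf"
    then show ?thesis unfolding wcat_cyl[symmetric] by (auto simp: S_inf_def wcat_cyl)
  qed (auto simp: S_inf_def wcat_fin)
  then show ?case by auto
next
  case Empty then show ?case by (simp add: sigma_sets.Empty)
next
  case (Compl X)
  interpret S: sigma_algebra Ainf "sigma_sets Ainf S_inf"
    by (rule sigma_algebra_sigma_sets[OF S_inf_Pow])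
  have "wcat [a] ` (Ainf - X) = wcat [a] ` Ainf - wcat [a] ` X"
    by (rule image_set_diff[OF inj_wcat1])
  moreover have "wcat [a] ` Ainf \<in> sigma_sets Ainf S_inf"
    using wcat_cyl[of a "[]"] by (auto simp: S_inf_def)
  ultimately show ?case
    using Compl S.Diff by metis
next
  case (Union X)
  then show ?case by (simp add: image_UN sigma_sets.Union)
qed

lemma wcat_sets: "S \<in> sets Ainf_M \<Longrightarrow> wcat [a] ` S \<in> sets Ainf_M"
  unfolding sets_Ainf_M by (rule wcat_sigma)

lemma emeasure_word_deriv:
  assumes N: "sets N = sets Ainf_M" and S: "S \<in> sets Ainf_M"
  shows "emeasure (word_deriv N a) S = emeasure N (wcat [a] ` S)"
  unfolding word_deriv_def
proof (rule emeasure_measure_of_sigma[OF _ _ _ S])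
  show "sigma_algebra Ainf (sets Ainf_M)"
    using sets.sigma_algebra_axioms[of Ainf_M] by (simp add: space_Ainf_M)
  show "positive (sets Ainf_M) (\<lambda>S. emeasure N (wcat [a] ` S))"
    by (simp add: positive_def)
  show "countably_additive (sets Ainf_M) (\<lambda>S. emeasure N (wcat [a] ` S))"
  proof (rule countably_additiveI)
    fix A :: "nat \<Rightarrow> 'a inf_word set" assume A: "range A \<subseteq> sets Ainf_M" "disjoint_family A"
    have "(\<Sum>i. emeasure N (wcat [a] ` A i)) = emeasure N (\<Union>i. wcat [a] ` A i)"
    proof (rule suminf_emeasure)
      show "range (\<lambda>i. wcat [a] ` A i) \<subseteq> sets N" using A(1) by (auto simp: N intro!: wcat_sets)
      show "disjoint_family (\<lambda>i. wcat [a] ` A i)"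
        using A(2) unfolding disjoint_family_on_def
        by (metis image_Int[OF inj_wcat1] image_empty)
    qed
    then show "(\<Sum>i. emeasure N (wcat [a] ` A i)) = emeasure N (wcat [a] ` (\<Union>i. A i))"
      by (simp add: image_UN)
  qed
qed

lemma sets_word_deriv[simp]: "sets (word_deriv N a) = sets Ainf_M"
  unfolding word_deriv_def
  by (simp add: sets_measure_of[OF sets.space_closed[of Ainf_M, unfolded space_Ainf_M]] sets.sigma_sets_eq[of Ainf_M, unfolded space_Ainf_M])

lemma space_word_deriv[simp]: "space (word_deriv N a) = Ainf"
  unfolding word_deriv_def
  by (rule space_measure_of[OF sets.space_closed[of Ainf_M, unfolded space_Ainf_M]])

lemma Ainf_measure_eq:
  assumes "sets N = sets Ainf_M" "sets N' = sets Ainf_M"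
    and "emeasure N Ainf \<noteq> \<infinity>"
    and "\<And>X. X \<in> S_inf \<Longrightarrow> emeasure N X = emeasure N' X"
  shows "N = N'"
proof (rule measure_eqI_generator_eq[OF Int_stable_S_inf S_inf_Pow, where A="\<lambda>_. Ainf"])
  show "sets N = sigma_sets Ainf S_inf" "sets N' = sigma_sets Ainf S_inf"
    using assms sets_Ainf_M by auto
  show "range (\<lambda>_. Ainf) \<subseteq> S_inf" using wcat_Nil_Ainf by (auto simp: S_inf_def) (metis wcat_Nil_Ainf)
qed (use assms in auto)



primrec lor :: "('a list \<Rightarrow> real) \<Rightarrow> ('a list \<Rightarrow> real) \<Rightarrow> ('a \<Rightarrow> nat) \<Rightarrow> 'a list \<Rightarrow> real" where
  "lor P Q e [] = 0"
| "lor P Q e (a # r) = lor P Q e r + Q (rev r) + (\<Sum>b\<in>{b. e b < e a}. P (rev r @ [b]))"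

definition lo :: "('a list \<Rightarrow> real) \<Rightarrow> ('a list \<Rightarrow> real) \<Rightarrow> ('a \<Rightarrow> nat) \<Rightarrow> 'a list \<Rightarrow> real" where
  "lo P Q e w = lor P Q e (rev w)"

definition Iv :: "('a list \<Rightarrow> real) \<Rightarrow> ('a list \<Rightarrow> real) \<Rightarrow> ('a \<Rightarrow> nat) \<Rightarrow> 'a list \<Rightarrow> real set" where
  "Iv P Q e w = {lo P Q e w ..< lo P Q e w + P w}"

definition Dm :: "('a list \<Rightarrow> real) \<Rightarrow> ('a list \<Rightarrow> real) \<Rightarrow> ('a \<Rightarrow> nat) \<Rightarrow> real \<Rightarrow> 'a inf_word" where
  "Dm P Q e u n = (if \<exists>w. length w = Suc n \<and> u \<in> Iv P Q e w
     then Some (last (SOME w. length w = Suc n \<and> u \<in> Iv P Q e w)) else None)"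

locale ivs =
  fixes P Q :: "'a::finite list \<Rightarrow> real" and e :: "'a \<Rightarrow> nat"
  assumes Pnn: "\<And>w. P w \<ge> 0" and Qnn: "\<And>w. Q w \<ge> 0"
    and Padd: "\<And>w. P w = Q w + (\<Sum>a\<in>UNIV. P (w @ [a]))"
    and einj: "inj e"
begin

abbreviation "I \<equiv> Iv P Q e"
abbreviation "D \<equiv> Dm P Q e"

lemma lo_Nil[simp]: "lo P Q e [] = 0" by (simp add: lo_def)

lemma lo_snoc: "lo P Q e (w @ [a]) = lo P Q e w + Q w + (\<Sum>b\<in>{b. e b < e a}. P (w @ [b]))"
  by (simp add: lo_def)

lemma lo_nn: "lo P Q e w \<ge> 0"
proof (induction w rule: rev_induct)
  case (snoc a w) then show ?case
    by (simp add: lo_snoc Qnn Pnn sum_nonneg)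
qed simp

lemma sum_less_a: "(\<Sum>b\<in>{b. e b < e a}. P (w @ [b])) + P (w @ [a]) \<le> (\<Sum>b\<in>{b. e b < e c}. P (w @ [b]))"
  if "e a < e c"
proof -
  have "(\<Sum>b\<in>{b. e b < e a}. P (w @ [b])) + P (w @ [a]) = (\<Sum>b\<in>insert a {b. e b < e a}. P (w @ [b]))"
    by (simp add: add.commute)
  also have "\<dots> \<le> (\<Sum>b\<in>{b. e b < e c}. P (w @ [b]))"
    by (rule sum_mono2) (use that Pnn in auto)
  finally show ?thesis .
qed

lemma sum_le_all: "(\<Sum>b\<in>{b. e b < e a}. P (w @ [b])) + P (w @ [a]) \<le> (\<Sum>b\<in>UNIV. P (w @ [b]))"
proof -
  have "(\<Sum>b\<in>{b. e b < e a}. P (w @ [b])) + P (w @ [a]) = (\<Sum>b\<in>insert a {b. e b < e a}. P (w @ [b]))"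
    by (simp add: add.commute)
  also have "\<dots> \<le> (\<Sum>b\<in>UNIV. P (w @ [b]))"
    by (rule sum_mono2) (use Pnn in auto)
  finally show ?thesis .
qed

lemma I_snoc_sub: "I (w @ [a]) \<subseteq> I w"
  using sum_le_all[where a=a and w=w] Padd[of w] Qnn[of w] Pnn[of "w@[a]"] lo_nn[of w]
    sum_nonneg[of "{b. e b < e a}" "\<lambda>b. P (w@[b])"] Pnn
  unfolding Iv_def lo_snoc by auto

lemma I_disj: "a \<noteq> b \<Longrightarrow> I (w @ [a]) \<inter> I (w @ [b]) = {}"
proof -
  assume "a \<noteq> b"
  then have "e a \<noteq> e b" using einj by (auto simp: inj_def)
  then consider "e a < e b" | "e b < e a" by linarith
  then show ?thesis
  proof cases
    case 1 show ?thesis using sum_less_a[OF 1, where w=w] unfolding Iv_def lo_snoc by auto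
  next
    case 2 show ?thesis using sum_less_a[OF 2, where w=w] unfolding Iv_def lo_snoc by auto
  qed
qed

lemma I_app_sub: "I (w @ v) \<subseteq> I w"
proof (induction v rule: rev_induct)
  case (snoc a v) then show ?case using I_snoc_sub[of "w @ v" a] by simp
qed simp

lemma I_take_sub: "I w \<subseteq> I (take k w)"
  using I_app_sub[of "take k w" "drop k w"] by simp

lemma I_unique: "u \<in> I w \<Longrightarrow> u \<in> I v \<Longrightarrow> length w = length v \<Longrightarrow> w = v"
proof (induction w arbitrary: v rule: rev_induct)
  case Nil then show ?case by simp
next
  case (snoc a w)
  have "v \<noteq> []" using snoc.prems(3) by auto
  define v' b where "v' = butlast v" and "b = last v"
  have v: "v = v' @ [b]" unfolding v'_def b_def using \<open>v \<noteq> []\<close> by simp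
  have l: "length w = length v'" using snoc.prems(3) v by simp
  have "u \<in> I w" using snoc.prems(1) I_snoc_sub by blast
  moreover have "u \<in> I v'" using snoc.prems(2) I_snoc_sub unfolding v by blast
  ultimately have wv: "w = v'" using snoc.IH l by blast
  have "a = b"
  proof (rule ccontr)
    assume "a \<noteq> b"
    then have "I (w @ [a]) \<inter> I (w @ [b]) = {}" by (rule I_disj)
    then show False using snoc.prems(1,2) unfolding v wv by blast
  qed
  then show ?case using v wv by simp
qed

lemma D_Some: "D u n = Some a \<longleftrightarrow> (\<exists>w. length w = n \<and> u \<in> I (w @ [a]))"
proof
  assume h: "D u n = Some a"
  then have ex: "\<exists>w. length w = Suc n \<and> u \<in> I w" by (auto simp: Dm_def split: if_splits)
  define w where "w = (SOME w. length w = Suc n \<and> u \<in> I w)"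
  have w: "length w = Suc n \<and> u \<in> I w" unfolding w_def by (rule someI_ex[OF ex])
  have "last w = a" using h ex unfolding Dm_def w_def by simp
  moreover have "w = butlast w @ [last w]" using w by (metis append_butlast_last_id list.size(3) nat.distinct(1))
  ultimately show "\<exists>w. length w = n \<and> u \<in> I (w @ [a])" using w
    by (metis diff_Suc_1 length_butlast)
next
  assume "\<exists>w. length w = n \<and> u \<in> I (w @ [a])"
  then obtain w where w: "length w = n" "u \<in> I (w @ [a])" by blast
  then have ex: "\<exists>w. length w = Suc n \<and> u \<in> I w" by (metis length_append_singleton)
  define w' where "w' = (SOME w. length w = Suc n \<and> u \<in> I w)"
  have w': "length w' = Suc n \<and> u \<in> I w'" unfolding w'_def by (rule someI_ex[OF ex])
  then have "w' = w @ [a]" using w I_unique[of u w' "w@[a]"] by simp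
  then show "D u n = Some a" using ex unfolding Dm_def w'_def[symmetric] by simp
qed

lemma D_None: "D u n = None \<longleftrightarrow> \<not> (\<exists>w. length w = Suc n \<and> u \<in> I w)"
  by (simp add: Dm_def)

lemma D_Ainf: "D u \<in> Ainf"
  unfolding Ainf_def
proof (safe)
  fix n assume "D u n = None"
  then have h: "\<not> (\<exists>w. length w = Suc n \<and> u \<in> I w)" by (simp add: D_None)
  show "D u (Suc n) = None"
  proof (rule ccontr)
    assume "D u (Suc n) \<noteq> None"
    then obtain w where "length w = Suc (Suc n)" "u \<in> I w" by (auto simp: D_None)
    then have "length (take (Suc n) w) = Suc n" "u \<in> I (take (Suc n) w)" using I_take_sub by auto
    then show False using h by blast
  qed
qed

lemma D_prefix:
  assumes u: "u \<in> I []" and h: "\<forall>k<length w. D u k = Some (w ! k)"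
  shows "u \<in> I w"
proof -
  have "k \<le> length w \<Longrightarrow> u \<in> I (take k w)" for k
  proof (induction k)
    case 0 then show ?case using u by simp
  next
    case (Suc k)
    then have k: "k < length w" by simp
    then obtain v where v: "length v = k" "u \<in> I (v @ [w ! k])" using h D_Some by blast
    then have "u \<in> I v" using I_snoc_sub by auto
    moreover have "u \<in> I (take k w)" using Suc.IH Suc.prems by simp
    moreover have "length (take k w) = k" using k by simp
    ultimately have "v = take k w" using I_unique v(1) by metis
    moreover have "take (Suc k) w = take k w @ [w ! k]" using k by (simp add: take_Suc_conv_app_nth)
    ultimately show ?case using v by simp
  qed
  then show ?thesis by (metis order.refl take_all)
qed

lemma D_cyl: "u \<in> I [] \<Longrightarrow> D u \<in> wcat w ` Ainf \<longleftrightarrow> u \<in> I w"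
proof
  assume "u \<in> I []" "D u \<in> wcat w ` Ainf"
  then show "u \<in> I w" using D_prefix unfolding wcat_image by auto
next
  assume u: "u \<in> I w"
  have "D u k = Some (w ! k)" if k: "k < length w" for k
  proof -
    have "take (Suc k) w = take k w @ [w ! k]" using k by (simp add: take_Suc_conv_app_nth)
    then have "u \<in> I (take k w @ [w ! k])" using u I_take_sub[of w "Suc k"] by auto
    moreover have "length (take k w) = k" using k by simp
    ultimately show ?thesis using D_Some by blast
  qed
  then show "D u \<in> wcat w ` Ainf" unfolding wcat_image using D_Ainf by auto
qed

lemma D_fin: "u \<in> I [] \<Longrightarrow> D u = fin_word w \<longleftrightarrow> u \<in> I w \<and> (\<forall>a. u \<notin> I (w @ [a]))"
proof -
  assume u: "u \<in> I []"
  have "D u = fin_word w \<longleftrightarrow> (\<forall>k<length w. D u k = Some (w!k)) \<and> D u (length w) = None"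
    by (rule fin_word_eq_iff[OF D_Ainf])
  also have "(\<forall>k<length w. D u k = Some (w!k)) \<longleftrightarrow> u \<in> I w"
    using D_cyl[OF u, of w] unfolding wcat_image using D_Ainf by auto
  finally have 1: "D u = fin_word w \<longleftrightarrow> u \<in> I w \<and> D u (length w) = None" .
  have "u \<in> I w \<Longrightarrow> D u (length w) = None \<longleftrightarrow> (\<forall>a. u \<notin> I (w @ [a]))"
  proof -
    assume uw: "u \<in> I w"
    have "D u (length w) = None \<longleftrightarrow> \<not> (\<exists>a. D u (length w) = Some a)" by auto
    also have "\<dots> \<longleftrightarrow> (\<forall>a. u \<notin> I (w @ [a]))"
      unfolding D_Some
    proof (intro iffI allI notI)
      fix a assume "\<nexists>a. \<exists>w'. length w' = length w \<and> u \<in> I (w' @ [a])" "u \<in> I (w @ [a])"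
      then show False by blast
    next
      assume h: "\<forall>a. u \<notin> I (w @ [a])" and "\<exists>a w'. length w' = length w \<and> u \<in> I (w' @ [a])"
      then obtain a w' where h2: "length w' = length w" "u \<in> I (w' @ [a])" by blast
      then have "u \<in> I w'" using I_snoc_sub by blast
      then have "w' = w" using I_unique[of u w' w] uw h2(1) by simp
      then show False using h h2 by blast
    qed
    finally show ?thesis .
  qed
  then show ?thesis using 1 by (metis (no_types))
qed

end



definition hM :: "('a list \<Rightarrow> real) \<Rightarrow> ('a list \<Rightarrow> real) \<Rightarrow> ('a \<Rightarrow> nat) \<Rightarrow> 'a inf_word measure" where
  "hM P Q e = distr (restrict_space lborel (Iv P Q e [])) Ainf_M (Dm P Q e)"

context ivs
begin

lemma I_sets[measurable, simp]: "I w \<in> sets borel"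
  unfolding Iv_def by simp

lemma I_sets'[simp]: "I w \<in> sets lborel"
  by simp

lemma I_sub_Nil: "I w \<subseteq> I []"
  using I_take_sub[of w 0] by simp

abbreviation "R \<equiv> restrict_space lborel (I [])"

lemma space_R: "space R = I []" by (simp add: space_restrict_space)

lemma sets_R_iff: "A \<in> sets R \<longleftrightarrow> A \<subseteq> I [] \<and> A \<in> sets lborel"
  by (rule sets_restrict_space_iff) (use I_sets[of "[]"] in simp)

lemma Dfin_pre: "D -` {fin_word w} \<inter> space R = I w - (\<Union>a. I (w @ [a]))"
proof (rule set_eqI)
  fix u show "u \<in> D -` {fin_word w} \<inter> space R \<longleftrightarrow> u \<in> I w - (\<Union>a. I (w @ [a]))"
  proof (cases "u \<in> I []")
    case True then show ?thesis unfolding space_R using D_fin[OF True, of w] by auto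
  next
    case False then show ?thesis unfolding space_R using I_sub_Nil[of w] by auto
  qed
qed

lemma Dcyl_pre: "D -` (wcat w ` Ainf) \<inter> space R = I w"
proof (rule set_eqI)
  fix u show "u \<in> D -` (wcat w ` Ainf) \<inter> space R \<longleftrightarrow> u \<in> I w"
  proof (cases "u \<in> I []")
    case True then show ?thesis unfolding space_R using D_cyl[OF True, of w] by auto
  next
    case False then show ?thesis unfolding space_R using I_sub_Nil[of w] by auto
  qed
qed

lemma D_meas: "D \<in> R \<rightarrow>\<^sub>M Ainf_M"
  unfolding Ainf_M_def
proof (rule measurable_measure_of[OF S_inf_Pow])
  show "D \<in> space R \<rightarrow> Ainf" using D_Ainf by auto
  fix y :: "'a inf_word set" assume "y \<in> S_inf"
  then have "y = {} \<or> (\<exists>w. y = {fin_word w}) \<or> (\<exists>w. y = wcat w ` Ainf)" by (auto simp: S_inf_def)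
  then show "D -` y \<inter> space R \<in> sets R"
  proof (elim disjE exE)
    fix w assume y: "y = {fin_word w}"
    show ?thesis unfolding y Dfin_pre sets_R_iff using I_sub_Nil[of w] by auto
  next
    fix w assume y: "y = wcat w ` Ainf"
    show ?thesis unfolding y Dcyl_pre sets_R_iff using I_sub_Nil[of w] by auto
  qed simp
qed

lemma sets_hM[simp]: "sets (hM P Q e) = sets Ainf_M" by (simp add: hM_def)
lemma space_hM[simp]: "space (hM P Q e) = Ainf" by (simp add: hM_def space_Ainf_M)

lemma emeasure_I: "emeasure lborel (I w) = ennreal (P w)"
  unfolding Iv_def using Pnn[of w] by simp

lemma emeasure_R: "A \<subseteq> I [] \<Longrightarrow> emeasure R A = emeasure lborel A"
  by (rule emeasure_restrict_space) auto

lemma hM_cyl: "emeasure (hM P Q e) (wcat w ` Ainf) = ennreal (P w)"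
proof -
  have "emeasure (hM P Q e) (wcat w ` Ainf) = emeasure R (D -` (wcat w ` Ainf) \<inter> space R)"
    unfolding hM_def by (rule emeasure_distr[OF D_meas cyl_sets])
  also have "\<dots> = emeasure R (I w)" by (simp only: Dcyl_pre)
  finally show ?thesis by (simp add: emeasure_R[OF I_sub_Nil] emeasure_I)
qed

lemma hM_Ainf: "emeasure (hM P Q e) Ainf = ennreal (P [])"
  using hM_cyl[of "[]"] by simp

lemma hM_fin: "emeasure (hM P Q e) {fin_word w} = ennreal (Q w)"
proof -
  have sub: "I w - (\<Union>a. I (w @ [a])) \<subseteq> I []" using I_sub_Nil by auto
  have U: "(\<Union>a. I (w @ [a])) \<subseteq> I w" using I_snoc_sub by auto
  have "emeasure lborel (\<Union>a. I (w @ [a])) = (\<Sum>a\<in>UNIV. emeasure lborel (I (w @ [a])))"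
    by (rule sum_emeasure[symmetric]) (auto simp: disjoint_family_on_def I_disj)
  also have "\<dots> = ennreal (\<Sum>a\<in>UNIV. P (w @ [a]))"
    by (simp add: emeasure_I Pnn)
  finally have 1: "emeasure lborel (\<Union>a. I (w @ [a])) = ennreal (\<Sum>a\<in>UNIV. P (w @ [a]))" .
  have "emeasure lborel (I w - (\<Union>a. I (w @ [a]))) = emeasure lborel (I w) - emeasure lborel (\<Union>a. I (w @ [a]))"
    by (rule emeasure_Diff) (use 1 U in auto)
  also have "\<dots> = ennreal (Q w)"
    unfolding 1 emeasure_I using Padd[of w] by (simp add: ennreal_minus sum_nonneg Pnn)
  finally have 2: "emeasure lborel (I w - (\<Union>a. I (w @ [a]))) = ennreal (Q w)" .
  have "emeasure (hM P Q e) {fin_word w} = emeasure R (D -` {fin_word w} \<inter> space R)"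
    unfolding hM_def by (rule emeasure_distr[OF D_meas fin_sets])
  also have "\<dots> = emeasure R (I w - (\<Union>a. I (w @ [a])))" by (simp only: Dfin_pre)
  finally show ?thesis using 2 by (simp add: emeasure_R[OF sub])
qed

lemma hM_subprob: "P [] \<le> 1 \<Longrightarrow> subprob_space (hM P Q e)"
proof (rule subprob_spaceI)
  show "space (hM P Q e) \<noteq> {}" using fin_word_Ainf by (metis empty_iff space_hM)
qed (auto simp: hM_Ainf)

end



definition tauw :: "'x measure \<Rightarrow> ('x \<Rightarrow> ('a \<times> 'x) option measure) \<Rightarrow> 'x measure \<Rightarrow> 'a list \<Rightarrow> 'x measure" where
  "tauw M \<alpha> m w = fold (tau M \<alpha>) w m"

lemma tauw_Nil[simp]: "tauw M \<alpha> m [] = m" by (simp add: tauw_def)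
lemma tauw_Cons: "tauw M \<alpha> m (a # w) = tauw M \<alpha> (tau M \<alpha> a m) w" by (simp add: tauw_def)
lemma tauw_snoc: "tauw M \<alpha> m (w @ [a]) = tau M \<alpha> a (tauw M \<alpha> m w)" by (simp add: tauw_def)

locale sett =
  fixes M :: "'x measure" and \<alpha> :: "'x \<Rightarrow> ('a::finite \<times> 'x) option measure"
  assumes alpha: "\<alpha> \<in> M \<rightarrow>\<^sub>M prob_algebra (L_M M)"
begin

abbreviation "OL \<equiv> Some ` (UNIV \<times> space M) \<union> {None :: ('a \<times> 'x) option}"
abbreviation "GL \<equiv> {S. S \<subseteq> OL \<and> Some -` S \<in> sets (count_space (UNIV::'a set) \<Otimes>\<^sub>M M)}"

lemma GL_Pow: "GL \<subseteq> Pow OL" by auto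

lemma space_L: "space (L_M M :: ('a \<times> 'x) option measure) = OL"
  unfolding L_M_def by (rule space_measure_of[OF GL_Pow])

lemma sets_L: "sets (L_M M :: ('a \<times> 'x) option measure) = sigma_sets OL GL"
  unfolding L_M_def by (rule sets_measure_of[OF GL_Pow])

lemma Ga_sets: "S \<in> sets M \<Longrightarrow> Some ` ({a} \<times> S) \<in> sets (L_M M :: ('a \<times> 'x) option measure)"
proof -
  assume S: "S \<in> sets M"
  have sub: "Some ` ({a} \<times> S) \<subseteq> OL" using sets.sets_into_space[OF S] by auto
  have "Some -` (Some ` ({a} \<times> S)) = {a} \<times> S" by auto
  then have pre: "Some -` (Some ` ({a} \<times> S)) \<in> sets (count_space UNIV \<Otimes>\<^sub>M M)"
    using S by simp
  have "Some ` ({a} \<times> S) \<in> GL" using sub pre by blast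
  then show ?thesis unfolding sets_L by auto
qed

lemma None_sets: "{None} \<in> sets (L_M M :: ('a \<times> 'x) option measure)"
proof -
  have "Some -` {None} = ({} :: ('a \<times> 'x) set)" by auto
  then have "{None} \<in> GL" by simp
  then show ?thesis unfolding sets_L by auto
qed

lemma alpha_sub: "\<alpha> \<in> M \<rightarrow>\<^sub>M subprob_algebra (L_M M)"
  by (rule measurable_prob_algebraD[OF alpha])

lemma alpha_prob: "x \<in> space M \<Longrightarrow> prob_space (\<alpha> x)"
  using measurable_space[OF alpha] by (auto simp: space_prob_algebra)

lemma sets_alpha: "x \<in> space M \<Longrightarrow> sets (\<alpha> x) = sets (L_M M)"
  using measurable_space[OF alpha] by (auto simp: space_prob_algebra)

lemma space_alpha: "x \<in> space M \<Longrightarrow> space (\<alpha> x) = OL"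
  using sets_eq_imp_space_eq[OF sets_alpha] space_L by simp

lemma alpha_emeas_meas: "A \<in> sets (L_M M) \<Longrightarrow> (\<lambda>x. emeasure (\<alpha> x) A) \<in> borel_measurable M"
  by (rule measurable_compose[OF alpha_sub measurable_emeasure_subprob_algebra])

lemma alpha_OL: "x \<in> space M \<Longrightarrow> emeasure (\<alpha> x) OL = 1"
  using prob_space.emeasure_space_1[OF alpha_prob] space_alpha by metis

abbreviation "tt \<equiv> tau M \<alpha>"
abbreviation "SP \<equiv> space (subprob_algebra M)"

lemma SP_space: "m \<in> SP \<Longrightarrow> space m = space M"
  using sets_eq_imp_space_eq[of m M] by (simp add: space_subprob_algebra)

lemma SP_ne: "m \<in> SP \<Longrightarrow> space M \<noteq> {}"
  using subprob_space.subprob_not_empty[of m] SP_space[of m] by (simp add: space_subprob_algebra)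

lemma emeasure_tau:
  assumes m: "m \<in> SP" and S: "S \<in> sets M"
  shows "emeasure (tt a m) S = (\<integral>\<^sup>+x. emeasure (\<alpha> x) (Some ` ({a} \<times> S)) \<partial>m)"
  unfolding tau_def
proof (rule emeasure_measure_of_sigma[OF sets.sigma_algebra_axioms _ _ S])
  show "positive (sets M) (\<lambda>S. \<integral>\<^sup>+x. emeasure (\<alpha> x) (Some ` ({a} \<times> S)) \<partial>m)"
    by (simp add: positive_def)
  show "countably_additive (sets M) (\<lambda>S. \<integral>\<^sup>+x. emeasure (\<alpha> x) (Some ` ({a} \<times> S)) \<partial>m)"
  proof (rule countably_additiveI)
    fix A :: "nat \<Rightarrow> 'x set" assume A: "range A \<subseteq> sets M" "disjoint_family A" "(\<Union>i. A i) \<in> sets M"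
    have mm: "sets m = sets M" using m by (simp add: space_subprob_algebra)
    have "(\<Sum>i. \<integral>\<^sup>+x. emeasure (\<alpha> x) (Some ` ({a} \<times> A i)) \<partial>m)
        = (\<integral>\<^sup>+x. (\<Sum>i. emeasure (\<alpha> x) (Some ` ({a} \<times> A i))) \<partial>m)"
      by (rule nn_integral_suminf[symmetric])
        (use A(1) in \<open>auto simp: measurable_cong_sets[OF mm refl] intro!: alpha_emeas_meas Ga_sets\<close>)
    also have "\<dots> = (\<integral>\<^sup>+x. emeasure (\<alpha> x) (Some ` ({a} \<times> (\<Union>i. A i))) \<partial>m)"
    proof (rule nn_integral_cong)
      fix x assume "x \<in> space m"
      then have x: "x \<in> space M" using SP_space[OF m] by simp
      have "(\<Sum>i. emeasure (\<alpha> x) (Some ` ({a} \<times> A i))) = emeasure (\<alpha> x) (\<Union>i. Some ` ({a} \<times> A i))"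
      proof (rule suminf_emeasure)
        show "range (\<lambda>i. Some ` ({a} \<times> A i)) \<subseteq> sets (\<alpha> x)"
          using A(1) Ga_sets sets_alpha[OF x] by auto
        show "disjoint_family (\<lambda>i. Some ` ({a} \<times> A i))"
          using A(2) unfolding disjoint_family_on_def by auto
      qed
      also have "(\<Union>i. Some ` ({a} \<times> A i)) = Some ` ({a} \<times> (\<Union>i. A i))" by auto
      finally show "(\<Sum>i. emeasure (\<alpha> x) (Some ` ({a} \<times> A i))) = emeasure (\<alpha> x) (Some ` ({a} \<times> (\<Union>i. A i)))" .
    qed
    finally show "(\<Sum>i. \<integral>\<^sup>+x. emeasure (\<alpha> x) (Some ` ({a} \<times> A i)) \<partial>m)
        = (\<integral>\<^sup>+x. emeasure (\<alpha> x) (Some ` ({a} \<times> (\<Union>i. A i))) \<partial>m)" .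
  qed
qed

lemma sets_tau[simp]: "sets (tt a m) = sets M"
  unfolding tau_def by (simp add: sets.sets_measure_of_eq)

lemma space_tau[simp]: "space (tt a m) = space M"
  unfolding tau_def by simp

lemma tau_SP: assumes m: "m \<in> SP" shows "tt a m \<in> SP"
proof -
  have mm: "sets m = sets M" using m by (simp add: space_subprob_algebra)
  have "emeasure (tt a m) (space M) = (\<integral>\<^sup>+x. emeasure (\<alpha> x) (Some ` ({a} \<times> space M)) \<partial>m)"
    by (rule emeasure_tau[OF m]) simp
  also have "\<dots> \<le> (\<integral>\<^sup>+x. 1 \<partial>m)"
  proof (rule nn_integral_mono)
    fix x assume "x \<in> space m"
    then have x: "x \<in> space M" using SP_space[OF m] by simp
    then interpret prob_space "\<alpha> x" by (rule alpha_prob)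
    show "emeasure (\<alpha> x) (Some ` ({a} \<times> space M)) \<le> 1" by (rule emeasure_le_1)
  qed
  also have "\<dots> = emeasure m (space m)" by simp
  also have "\<dots> \<le> 1" using m subprob_space.emeasure_space_le_1[of m] by (simp add: space_subprob_algebra)
  finally have "emeasure (tt a m) (space M) \<le> 1" .
  then have "subprob_space (tt a m)" using SP_ne[OF m] by (intro subprob_spaceI) simp_all
  then show ?thesis by (simp add: space_subprob_algebra)
qed

lemma tau_meas: "tt a \<in> subprob_algebra M \<rightarrow>\<^sub>M subprob_algebra M"
proof (rule measurable_subprob_algebra)
  fix m assume m: "m \<in> SP"
  show "subprob_space (tt a m)" using tau_SP[OF m] by (simp add: space_subprob_algebra)
  show "sets (tt a m) = sets M" by simp
next
  fix A assume A: "A \<in> sets M"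
  have "(\<lambda>m. \<integral>\<^sup>+x. emeasure (\<alpha> x) (Some ` ({a} \<times> A)) \<partial>m) \<in> borel_measurable (subprob_algebra M)"
    by (rule nn_integral_measurable_subprob_algebra[OF alpha_emeas_meas[OF Ga_sets[OF A]]])
  then show "(\<lambda>m. emeasure (tt a m) A) \<in> borel_measurable (subprob_algebra M)"
    by (rule measurable_cong[THEN iffD1, rotated]) (simp add: emeasure_tau[OF _ A])
qed

lemma tauw_SP: "m \<in> SP \<Longrightarrow> tauw M \<alpha> m w \<in> SP"
  by (induction w arbitrary: m) (auto simp: tauw_Cons tau_SP)

lemma tauw_meas: "(\<lambda>m. tauw M \<alpha> m w) \<in> subprob_algebra M \<rightarrow>\<^sub>M subprob_algebra M"
proof (induction w rule: rev_induct)
  case (snoc a w)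
  show ?case unfolding tauw_snoc by (rule measurable_compose[OF snoc tau_meas])
qed simp

end



context sett
begin

lemma mm_sets: "m \<in> SP \<Longrightarrow> sets m = sets M" by (simp add: space_subprob_algebra)

lemma Ka_meas: "(\<lambda>x. tt a (return M x)) \<in> M \<rightarrow>\<^sub>M subprob_algebra M"
  by (rule measurable_compose[OF return_measurable tau_meas])

lemma return_SP: "x \<in> space M \<Longrightarrow> return M x \<in> SP"
  by (simp add: space_subprob_algebra subprob_space_return)

lemma emeasure_Ka: "x \<in> space M \<Longrightarrow> S \<in> sets M \<Longrightarrow>
    emeasure (tt a (return M x)) S = emeasure (\<alpha> x) (Some ` ({a} \<times> S))"
  by (simp add: emeasure_tau[OF return_SP] nn_integral_return alpha_emeas_meas Ga_sets)

lemma tau_bind: assumes m: "m \<in> SP" shows "tt a m = m \<bind> (\<lambda>x. tt a (return M x))"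
proof (rule measure_eqI)
  have ne: "space m \<noteq> {}" using SP_ne[OF m] SP_space[OF m] by simp
  have Km: "(\<lambda>x. tt a (return M x)) \<in> m \<rightarrow>\<^sub>M subprob_algebra M"
    by (subst measurable_cong_sets[OF mm_sets[OF m] refl]) (rule Ka_meas)
  show "sets (tt a m) = sets (m \<bind> (\<lambda>x. tt a (return M x)))"
    using sets_bind[OF _ ne, of "\<lambda>x. tt a (return M x)" M] by simp
  fix S assume "S \<in> sets (tt a m)"
  then have S: "S \<in> sets M" by simp
  have "emeasure (m \<bind> (\<lambda>x. tt a (return M x))) S = (\<integral>\<^sup>+x. emeasure (tt a (return M x)) S \<partial>m)"
    by (rule emeasure_bind[OF ne Km S])
  also have "\<dots> = (\<integral>\<^sup>+x. emeasure (\<alpha> x) (Some ` ({a} \<times> S)) \<partial>m)"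
    by (rule nn_integral_cong) (simp add: emeasure_Ka S SP_space[OF m])
  finally show "emeasure (tt a m) S = emeasure (m \<bind> (\<lambda>x. tt a (return M x))) S"
    by (simp add: emeasure_tau[OF m S])
qed

lemma nn_integral_tau:
  assumes m: "m \<in> SP" and g: "g \<in> borel_measurable M"
  shows "(\<integral>\<^sup>+y. g y \<partial>tt a m) = (\<integral>\<^sup>+x. (\<integral>\<^sup>+y. g y \<partial>tt a (return M x)) \<partial>m)"
proof -
  have Km: "(\<lambda>x. tt a (return M x)) \<in> m \<rightarrow>\<^sub>M subprob_algebra M"
    by (subst measurable_cong_sets[OF mm_sets[OF m] refl]) (rule Ka_meas)
  show ?thesis
    by (subst tau_bind[OF m]) (rule nn_integral_bind[OF g Km])
qed

lemma tauw_return_meas: "(\<lambda>x. tauw M \<alpha> (return M x) w) \<in> M \<rightarrow>\<^sub>M subprob_algebra M"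
  by (rule measurable_compose[OF return_measurable tauw_meas])

lemma nn_integral_tauw:
  assumes m: "m \<in> SP" and g: "g \<in> borel_measurable M"
  shows "(\<integral>\<^sup>+y. g y \<partial>tauw M \<alpha> m w) = (\<integral>\<^sup>+x. (\<integral>\<^sup>+y. g y \<partial>tauw M \<alpha> (return M x) w) \<partial>m)"
  using m
proof (induction w arbitrary: m)
  case Nil
  show ?case
    by (simp, rule nn_integral_cong) (simp add: nn_integral_return g SP_space[OF Nil])
next
  case (Cons a w)
  define G where "G y = (\<integral>\<^sup>+z. g z \<partial>tauw M \<alpha> (return M y) w)" for y
  have Gm: "G \<in> borel_measurable M"
    unfolding G_def
    by (rule measurable_compose[OF tauw_return_meas nn_integral_measurable_subprob_algebra[OF g]])
  have "(\<integral>\<^sup>+y. g y \<partial>tauw M \<alpha> m (a # w)) = (\<integral>\<^sup>+y. G y \<partial>tt a m)"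
    unfolding tauw_Cons G_def by (rule Cons.IH[OF tau_SP[OF Cons.prems]])
  also have "\<dots> = (\<integral>\<^sup>+x. (\<integral>\<^sup>+y. G y \<partial>tt a (return M x)) \<partial>m)"
    by (rule nn_integral_tau[OF Cons.prems Gm])
  also have "\<dots> = (\<integral>\<^sup>+x. (\<integral>\<^sup>+y. g y \<partial>tauw M \<alpha> (return M x) (a # w)) \<partial>m)"
  proof (rule nn_integral_cong)
    fix x assume "x \<in> space m"
    then have x: "x \<in> space M" using SP_space[OF Cons.prems] by simp
    show "(\<integral>\<^sup>+y. G y \<partial>tt a (return M x)) = (\<integral>\<^sup>+y. g y \<partial>tauw M \<alpha> (return M x) (a # w))"
      unfolding tauw_Cons G_def by (rule Cons.IH[OF tau_SP[OF return_SP[OF x]], symmetric])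
  qed
  finally show ?case .
qed

lemma alpha_L: "x \<in> space M \<Longrightarrow> emeasure (\<alpha> x) (space (L_M M)) = 1"
  using alpha_OL[of x] space_L by metis

lemma alpha1_eq: "m \<in> SP \<Longrightarrow> alpha1 M \<alpha> m = emeasure m (space M)"
proof -
  assume m: "m \<in> SP"
  have "alpha1 M \<alpha> m = (\<integral>\<^sup>+x. 1 \<partial>m)"
    unfolding alpha1_def by (rule nn_integral_cong) (simp add: alpha_L SP_space[OF m])
  then show ?thesis using SP_space[OF m] by simp
qed

lemma conj1: assumes m: "m \<in> SP"
  shows "alpha1 M \<alpha> m = alphaStar M \<alpha> m + (\<Sum>a\<in>UNIV. alpha1 M \<alpha> (tt a m))"
proof -
  have mb: "(\<lambda>x. emeasure (\<alpha> x) A) \<in> borel_measurable m" if "A \<in> sets (L_M M)" for A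
    by (subst measurable_cong_sets[OF mm_sets[OF m] refl]) (rule alpha_emeas_meas[OF that])
  have "(\<Sum>a\<in>UNIV. alpha1 M \<alpha> (tt a m)) = (\<Sum>a\<in>UNIV. \<integral>\<^sup>+x. emeasure (\<alpha> x) (Some ` ({a} \<times> space M)) \<partial>m)"
    by (simp add: alpha1_eq tau_SP[OF m] emeasure_tau[OF m])
  also have "\<dots> = (\<integral>\<^sup>+x. (\<Sum>a\<in>UNIV. emeasure (\<alpha> x) (Some ` ({a} \<times> space M))) \<partial>m)"
    by (rule nn_integral_sum[symmetric]) (simp add: mb Ga_sets)
  finally have 1: "(\<Sum>a\<in>UNIV. alpha1 M \<alpha> (tt a m)) = \<dots>" .
  have smb: "(\<lambda>x. \<Sum>a\<in>UNIV. emeasure (\<alpha> x) (Some ` ({a} \<times> space M))) \<in> borel_measurable m"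
    by (rule borel_measurable_sum) (simp add: mb Ga_sets)
  have "alphaStar M \<alpha> m + (\<Sum>a\<in>UNIV. alpha1 M \<alpha> (tt a m))
      = (\<integral>\<^sup>+x. emeasure (\<alpha> x) {None} + (\<Sum>a\<in>UNIV. emeasure (\<alpha> x) (Some ` ({a} \<times> space M))) \<partial>m)"
    unfolding 1 alphaStar_def
    by (rule nn_integral_add[symmetric]) (simp_all add: mb None_sets smb)
  also have "\<dots> = (\<integral>\<^sup>+x. emeasure (\<alpha> x) (space (L_M M)) \<partial>m)"
  proof (rule nn_integral_cong)
    fix x assume "x \<in> space m"
    then have x: "x \<in> space M" using SP_space[OF m] by simp
    have sa: "sets (\<alpha> x) = sets (L_M M)" by (rule sets_alpha[OF x])
    have "(\<Sum>a\<in>UNIV. emeasure (\<alpha> x) (Some ` ({a} \<times> space M))) = emeasure (\<alpha> x) (\<Union>a. Some ` ({a} \<times> space M))"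
      by (rule sum_emeasure) (auto simp: sa Ga_sets disjoint_family_on_def)
    moreover have "emeasure (\<alpha> x) {None} + emeasure (\<alpha> x) (\<Union>a. Some ` ({a} \<times> space M))
        = emeasure (\<alpha> x) ({None} \<union> (\<Union>a. Some ` ({a} \<times> space M)))"
    proof (rule plus_emeasure)
      show "{None} \<in> sets (\<alpha> x)" by (simp add: sa None_sets)
      show "(\<Union>a. Some ` ({a} \<times> space M)) \<in> sets (\<alpha> x)"
        unfolding sa by (rule sets.countable_UN) (auto simp: Ga_sets)
    qed auto
    moreover have "{None} \<union> (\<Union>a. Some ` ({a} \<times> space M)) = space (L_M M :: ('a \<times> 'x) option measure)"
      unfolding space_L by auto
    ultimately show "emeasure (\<alpha> x) {None} + (\<Sum>a\<in>UNIV. emeasure (\<alpha> x) (Some ` ({a} \<times> space M)))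
        = emeasure (\<alpha> x) (space (L_M M))" by metis
  qed
  finally show ?thesis by (simp add: alpha1_def)
qed

definition pm :: "'x measure \<Rightarrow> 'a list \<Rightarrow> ennreal" where
  "pm m w = emeasure (tauw M \<alpha> m w) (space M)"

definition qm :: "'x measure \<Rightarrow> 'a list \<Rightarrow> ennreal" where
  "qm m w = alphaStar M \<alpha> (tauw M \<alpha> m w)"

lemma pm_Cons: "pm m (a # w) = pm (tt a m) w" by (simp add: pm_def tauw_Cons)
lemma qm_Cons: "qm m (a # w) = qm (tt a m) w" by (simp add: qm_def tauw_Cons)

lemma pm_add: "m \<in> SP \<Longrightarrow> pm m w = qm m w + (\<Sum>a\<in>UNIV. pm m (w @ [a]))"
  using conj1[OF tauw_SP, of m w]
  by (simp add: pm_def qm_def tauw_snoc alpha1_eq tauw_SP tau_SP)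

lemma pm_le1: "m \<in> SP \<Longrightarrow> pm m w \<le> 1"
  unfolding pm_def using tauw_SP[of m w] SP_space[of "tauw M \<alpha> m w"]
    subprob_space.emeasure_space_le_1[of "tauw M \<alpha> m w"]
  by (simp add: space_subprob_algebra)

lemma qm_le_pm: "m \<in> SP \<Longrightarrow> qm m w \<le> pm m w"
  using pm_add[of m w] by (simp add: le_iff_add)

end



context sett
begin

abbreviation "PR m w \<equiv> enn2real (pm m w)"
abbreviation "QR m w \<equiv> enn2real (qm m w)"

definition hh :: "'x measure \<Rightarrow> 'a inf_word measure" where
  "hh m = hM (PR m) (QR m) to_nat"

lemma pm_fin: "m \<in> SP \<Longrightarrow> pm m w < top"
  using pm_le1[of m w] by (metis ennreal_one_less_top le_less_trans)

lemma qm_fin: "m \<in> SP \<Longrightarrow> qm m w < top"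
  using qm_le_pm[of m w] pm_fin[of m w] by (metis le_less_trans)

lemma ivs_m: assumes m: "m \<in> SP" shows "ivs (PR m) (QR m) to_nat"
proof
  fix w
  have "PR m w = enn2real (qm m w + (\<Sum>a\<in>UNIV. pm m (w @ [a])))"
    using pm_add[OF m, of w] by simp
  also have "\<dots> = QR m w + enn2real (\<Sum>a\<in>UNIV. pm m (w @ [a]))"
    by (rule enn2real_plus) (use qm_fin[OF m] pm_fin[OF m] in \<open>auto simp: ennreal_sum_less_top\<close>)
  also have "enn2real (\<Sum>a\<in>UNIV. pm m (w @ [a])) = (\<Sum>a\<in>UNIV. PR m (w @ [a]))"
    by (subst enn2real_sum) (use pm_fin[OF m] in auto)
  finally show "PR m w = QR m w + (\<Sum>a\<in>UNIV. PR m (w @ [a]))" .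
qed auto

lemma hh_cyl: "m \<in> SP \<Longrightarrow> emeasure (hh m) (wcat w ` Ainf) = pm m w"
proof -
  assume m: "m \<in> SP"
  interpret ivs "PR m" "QR m" to_nat by (rule ivs_m[OF m])
  show ?thesis unfolding hh_def hM_cyl using pm_fin[OF m] by simp
qed

lemma hh_fin: "m \<in> SP \<Longrightarrow> emeasure (hh m) {fin_word w} = qm m w"
proof -
  assume m: "m \<in> SP"
  interpret ivs "PR m" "QR m" to_nat by (rule ivs_m[OF m])
  show ?thesis unfolding hh_def hM_fin using qm_fin[OF m] by simp
qed

lemma hh_SP: "m \<in> SP \<Longrightarrow> hh m \<in> space (subprob_algebra Ainf_M)"
proof -
  assume m: "m \<in> SP"
  interpret ivs "PR m" "QR m" to_nat by (rule ivs_m[OF m])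
  have "PR m [] \<le> 1" using pm_le1[OF m, of "[]"] pm_fin[OF m, of "[]"]
    by (simp add: enn2real_leI)
  then show ?thesis unfolding hh_def space_subprob_algebra using hM_subprob by simp
qed

lemma pm_meas: "(\<lambda>m. pm m w) \<in> borel_measurable (subprob_algebra M)"
  unfolding pm_def by (rule measurable_compose[OF tauw_meas measurable_emeasure_subprob_algebra[OF sets.top]])

lemma qm_meas: "(\<lambda>m. qm m w) \<in> borel_measurable (subprob_algebra M)"
  unfolding qm_def alphaStar_def
  by (rule measurable_compose[OF tauw_meas nn_integral_measurable_subprob_algebra[OF alpha_emeas_meas[OF None_sets]]])

lemma hh_meas: "hh \<in> subprob_algebra M \<rightarrow>\<^sub>M subprob_algebra Ainf_M"
proof (rule measurable_subprob_algebra_generated[OF sets_Ainf_M Int_stable_S_inf S_inf_Pow])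
  fix m assume m: "m \<in> SP"
  show "subprob_space (hh m)" "sets (hh m) = sets Ainf_M" using hh_SP[OF m] by (simp_all add: space_subprob_algebra)
next
  fix A :: "'a inf_word set" assume "A \<in> S_inf"
  then have "A = {} \<or> (\<exists>w. A = {fin_word w}) \<or> (\<exists>w. A = wcat w ` Ainf)" by (auto simp: S_inf_def)
  then show "(\<lambda>m. emeasure (hh m) A) \<in> borel_measurable (subprob_algebra M)"
  proof (elim disjE exE)
    fix w assume A: "A = {fin_word w}"
    show ?thesis unfolding A
      by (rule measurable_cong[THEN iffD2, OF _ qm_meas[of w]]) (simp add: hh_fin)
  next
    fix w assume A: "A = wcat w ` Ainf"
    show ?thesis unfolding A
      by (rule measurable_cong[THEN iffD2, OF _ pm_meas[of w]]) (simp add: hh_cyl)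
  qed simp
next
  show "(\<lambda>m. emeasure (hh m) Ainf) \<in> borel_measurable (subprob_algebra M)"
    using measurable_cong[THEN iffD2, OF _ pm_meas[of "[]"], of "\<lambda>m. emeasure (hh m) Ainf"]
    by (simp add: hh_cyl[of _ "[]", simplified])
qed

lemma Pi_eq_iff:
  "Pi_coalg (h m) = F_map h (alpha_sharp M \<alpha> m) \<longleftrightarrow>
     emeasure (h m) Ainf = alpha1 M \<alpha> m \<and> emeasure (h m) {fin_word []} = alphaStar M \<alpha> m
     \<and> (\<forall>a. word_deriv (h m) a = h (tt a m))"
  unfolding Pi_coalg_def F_map_def alpha_sharp_def by (auto simp: fun_eq_iff)

lemma hh_morph: "is_F_morphism (subprob_algebra M) (alpha_sharp M \<alpha>) (subprob_algebra Ainf_M) Pi_coalg hh"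
  unfolding is_F_morphism_def
proof (intro conjI ballI hh_meas)
  fix m assume m: "m \<in> SP"
  have sh: "sets (hh m) = sets Ainf_M" using hh_SP[OF m] by (simp add: space_subprob_algebra)
  have "emeasure (hh m) Ainf = alpha1 M \<alpha> m"
    using hh_cyl[OF m, of "[]"] by (simp add: pm_def alpha1_eq[OF m])
  moreover have "emeasure (hh m) {fin_word []} = alphaStar M \<alpha> m"
    using hh_fin[OF m, of "[]"] by (simp add: qm_def)
  moreover have "word_deriv (hh m) a = hh (tt a m)" for a
  proof (rule Ainf_measure_eq)
    show "sets (word_deriv (hh m) a) = sets Ainf_M" by simp
    show "sets (hh (tt a m)) = sets Ainf_M" using hh_SP[OF tau_SP[OF m]] by (simp add: space_subprob_algebra)
    show "emeasure (word_deriv (hh m) a) Ainf \<noteq> \<infinity>"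
      using emeasure_word_deriv[OF sh Ainf_sets, of a] wcat_cyl[of a "[]"] hh_cyl[OF m, of "[a]"] pm_fin[OF m, of "[a]"]
      by simp
    fix X :: "'a inf_word set" assume "X \<in> S_inf"
    then have "X = {} \<or> (\<exists>w. X = {fin_word w}) \<or> (\<exists>w. X = wcat w ` Ainf)" by (auto simp: S_inf_def)
    then show "emeasure (word_deriv (hh m) a) X = emeasure (hh (tt a m)) X"
    proof (elim disjE exE)
      fix w assume X: "X = {fin_word w}"
      show ?thesis unfolding X emeasure_word_deriv[OF sh fin_sets]
        by (simp add: wcat_fin hh_fin m tau_SP qm_Cons)
    next
      fix w assume X: "X = wcat w ` Ainf"
      show ?thesis unfolding X emeasure_word_deriv[OF sh cyl_sets] wcat_cyl
        by (simp add: hh_cyl m tau_SP pm_Cons)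
    qed simp
  qed
  ultimately show "Pi_coalg (hh m) = F_map hh (alpha_sharp M \<alpha> m)"
    unfolding Pi_eq_iff by simp
qed

lemma morph_vals:
  assumes h: "is_F_morphism (subprob_algebra M) (alpha_sharp M \<alpha>) (subprob_algebra Ainf_M) Pi_coalg h"
  shows "m \<in> SP \<Longrightarrow> emeasure (h m) (wcat w ` Ainf) = pm m w \<and> emeasure (h m) {fin_word w} = qm m w"
proof (induction w arbitrary: m)
  case Nil
  then have "Pi_coalg (h m) = F_map h (alpha_sharp M \<alpha> m)" using h unfolding is_F_morphism_def by blast
  then show ?case unfolding Pi_eq_iff using Nil by (simp add: pm_def qm_def alpha1_eq)
next
  case (Cons a w)
  have m: "m \<in> SP" by fact
  have "Pi_coalg (h m) = F_map h (alpha_sharp M \<alpha> m)" using h m unfolding is_F_morphism_def by blast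
  then have wd: "word_deriv (h m) a = h (tt a m)" unfolding Pi_eq_iff by simp
  have hm: "h \<in> subprob_algebra M \<rightarrow>\<^sub>M subprob_algebra Ainf_M" using h unfolding is_F_morphism_def by blast
  have sh: "sets (h m) = sets Ainf_M" using measurable_space[OF hm m] by (simp add: space_subprob_algebra)
  have IH: "emeasure (h (tt a m)) (wcat w ` Ainf) = pm (tt a m) w \<and> emeasure (h (tt a m)) {fin_word w} = qm (tt a m) w"
    by (rule Cons.IH[OF tau_SP[OF m]])
  have "emeasure (h m) (wcat (a # w) ` Ainf) = emeasure (word_deriv (h m) a) (wcat w ` Ainf)"
    unfolding emeasure_word_deriv[OF sh cyl_sets] wcat_cyl ..
  moreover have "emeasure (h m) {fin_word (a # w)} = emeasure (word_deriv (h m) a) {fin_word w}"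
    unfolding emeasure_word_deriv[OF sh fin_sets] by (simp add: wcat_fin)
  ultimately show ?case using IH wd by (simp add: pm_Cons qm_Cons)
qed

lemma morph_unique:
  assumes h: "is_F_morphism (subprob_algebra M) (alpha_sharp M \<alpha>) (subprob_algebra Ainf_M) Pi_coalg h"
    and h': "is_F_morphism (subprob_algebra M) (alpha_sharp M \<alpha>) (subprob_algebra Ainf_M) Pi_coalg h'"
    and m: "m \<in> SP"
  shows "h m = h' m"
proof (rule Ainf_measure_eq)
  have hm: "h \<in> subprob_algebra M \<rightarrow>\<^sub>M subprob_algebra Ainf_M" using h unfolding is_F_morphism_def by blast
  have hm': "h' \<in> subprob_algebra M \<rightarrow>\<^sub>M subprob_algebra Ainf_M" using h' unfolding is_F_morphism_def by blast
  show "sets (h m) = sets Ainf_M" using measurable_space[OF hm m] by (simp add: space_subprob_algebra)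
  show "sets (h' m) = sets Ainf_M" using measurable_space[OF hm' m] by (simp add: space_subprob_algebra)
  show "emeasure (h m) Ainf \<noteq> \<infinity>" using morph_vals[OF h m, of "[]"] pm_fin[OF m, of "[]"] by simp
  fix X :: "'a inf_word set" assume "X \<in> S_inf"
  then have "X = {} \<or> (\<exists>w. X = {fin_word w}) \<or> (\<exists>w. X = wcat w ` Ainf)" by (auto simp: S_inf_def)
  then show "emeasure (h m) X = emeasure (h' m) X"
    using morph_vals[OF h m] morph_vals[OF h' m] by auto
qed

lemma morph_integral:
  assumes h: "is_F_morphism (subprob_algebra M) (alpha_sharp M \<alpha>) (subprob_algebra Ainf_M) Pi_coalg h"
    and m: "m \<in> SP" and S: "S \<in> S_inf"
  shows "emeasure (h m) S = (\<integral>\<^sup>+x. emeasure (h (return M x)) S \<partial>m)"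
proof -
  have sp: "x \<in> space m \<Longrightarrow> return M x \<in> SP" for x using return_SP SP_space[OF m] by simp
  from S have "S = {} \<or> (\<exists>w. S = {fin_word w}) \<or> (\<exists>w. S = wcat w ` Ainf)" by (auto simp: S_inf_def)
  then show ?thesis
  proof (elim disjE exE)
    fix w assume S: "S = {fin_word w}"
    have "emeasure (h m) S = qm m w" using morph_vals[OF h m] S by simp
    also have "\<dots> = (\<integral>\<^sup>+y. emeasure (\<alpha> y) {None} \<partial>tauw M \<alpha> m w)" by (simp add: qm_def alphaStar_def)
    also have "\<dots> = (\<integral>\<^sup>+x. (\<integral>\<^sup>+y. emeasure (\<alpha> y) {None} \<partial>tauw M \<alpha> (return M x) w) \<partial>m)"
      by (rule nn_integral_tauw[OF m alpha_emeas_meas[OF None_sets]])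
    also have "\<dots> = (\<integral>\<^sup>+x. emeasure (h (return M x)) S \<partial>m)"
      by (rule nn_integral_cong) (simp add: S morph_vals[OF h sp] qm_def alphaStar_def)
    finally show ?thesis .
  next
    fix w assume S: "S = wcat w ` Ainf"
    have "emeasure (h m) S = pm m w" using morph_vals[OF h m] S by simp
    also have "\<dots> = (\<integral>\<^sup>+y. 1 \<partial>tauw M \<alpha> m w)"
      using SP_space[OF tauw_SP[OF m]] by (simp add: pm_def)
    also have "\<dots> = (\<integral>\<^sup>+x. (\<integral>\<^sup>+y. 1 \<partial>tauw M \<alpha> (return M x) w) \<partial>m)"
      by (rule nn_integral_tauw[OF m]) simp
    also have "\<dots> = (\<integral>\<^sup>+x. emeasure (h (return M x)) S \<partial>m)"
    proof (rule nn_integral_cong)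
      fix x assume x: "x \<in> space m"
      show "(\<integral>\<^sup>+y. 1 \<partial>tauw M \<alpha> (return M x) w) = emeasure (h (return M x)) S"
        using SP_space[OF tauw_SP[OF sp[OF x]]] morph_vals[OF h sp[OF x]] by (simp add: S pm_def)
    qed
    finally show ?thesis .
  qed simp
qed

end

theorem mainTheorem12:
  fixes M :: "'x measure" and \<alpha> :: "'x \<Rightarrow> ('a::finite \<times> 'x) option measure"
  assumes "\<alpha> \<in> M \<rightarrow>\<^sub>M prob_algebra (L_M M)"
  shows "(\<forall>m\<in>space (subprob_algebra M).
            alpha1 M \<alpha> m = alphaStar M \<alpha> m + (\<Sum>a\<in>UNIV. alpha1 M \<alpha> (tau M \<alpha> a m)))
    \<and> (\<exists>h. is_F_morphism (subprob_algebra M) (alpha_sharp M \<alpha>) (subprob_algebra Ainf_M) Pi_coalg h)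
    \<and> (\<forall>h h'. is_F_morphism (subprob_algebra M) (alpha_sharp M \<alpha>) (subprob_algebra Ainf_M) Pi_coalg h
         \<longrightarrow> is_F_morphism (subprob_algebra M) (alpha_sharp M \<alpha>) (subprob_algebra Ainf_M) Pi_coalg h'
         \<longrightarrow> (\<forall>m\<in>space (subprob_algebra M). h m = h' m))
    \<and> (\<forall>h. is_F_morphism (subprob_algebra M) (alpha_sharp M \<alpha>) (subprob_algebra Ainf_M) Pi_coalg h
         \<longrightarrow> (\<forall>m\<in>space (subprob_algebra M). \<forall>S\<in>(S_inf :: 'a inf_word set set).
               emeasure (h m) S = (\<integral>\<^sup>+ x. emeasure (h (return M x)) S \<partial>m)))"
proof -
  interpret sett M \<alpha> by unfold_locales (rule assms)
  show ?thesis
    using conj1 hh_morph morph_unique morph_integral by blast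
qed


end
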